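(* Let $\alpha\in(0,\infty)^T$ and $u_t(x)=\frac{1}{\alpha_t}[1-\exp(-\alpha_t x)]$, $t\in\mathbb{T}$. Then for $x\in\mathbb{R}$ and $Z\in L^\infty$: (a) $U(Z)=\frac{1}{\beta_1}\{1-E[L_1(\alpha,Z)]\}$; (b) $U(x-Z)=\frac{1}{\beta_1}\{1-\exp(-\beta_1x)E[L_1(\alpha,-Z)]\}$; (c) for any initial wealth $w\in\mathbb{R}$, the indifference price is $H(Z)=\frac{1}{\beta_1}\log E[L_1(\alpha,-Z)]$ (in particular it does not depend on $w$).
   Context: Let $T\ge 1$ be an integer and $\mathbb{T}=\{1,\dots,T\}$. Let $(\Omega,\mathcal{F},(\mathcal{F}_t)_{t\in\{0,1,\dots,T\}},P)$ be a filtered probability space and $L^{\infty}=L^{\infty}(\Omega,\mathcal{F}_T,P)$; write $E_t[Y]=E[Y\mid\mathcal{F}_t]$. Let $(r_t)_{t\in\mathbb{T}}$ be a bounded, nonnegative, predictable process, $B_0=1$, $B_t=\prod_{k=1}^t(1+r_k)$, and $\tilde X_t=X_t/B_t$. For $W\in L^\infty$, $\mathcal{A}(W)$ is the set of $(\mathcal{F}_t)$-adapted processes $(Y_t)_{t\in\mathbb{T}}$ with $Y_t\in L^\infty$ and $\sum_{t\in\mathbb{T}}\tilde Y_t=W$ a.s., and $U(W)=\sup\{\sum_{t\in\mathbb{T}}E[u_t(\tilde Y_t)]:(Y_t)\in\mathcal{A}(W)\}$. The indifference price $H(Z)$ of $Z\in L^\infty$ at initial wealth $w$ is the real number with $U(w+H(Z)-Z)=U(w)$.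 For $\alpha\in(0,\infty)^T$ define $\beta_t$ by $1/\beta_t=\sum_{k=t}^T 1/\alpha_k$. For $W\in L^\infty$ define $L_T(\alpha,W)=\exp(-\alpha_T W)$ and $L_{t-1}(\alpha,W)=E_{t-1}[L_t(\alpha,W)]^{\beta_{t-1}/\beta_t}$ for $t=2,\dots,T$. *)

theory Defs
  imports "HOL-Probability.Probability"
begin

text \<open>Essentially bounded random variables measurable w.r.t. F_T : the space L-infinity
  (random variables are functions; a.s. identification is handled by AE statements).\<close>
definition Linf :: "'a measure \<Rightarrow> 'a measure \<Rightarrow> ('a \<Rightarrow> real) \<Rightarrow> bool" where
  "Linf M FT X \<longleftrightarrow> X \<in> borel_measurable FT \<and> (\<exists>C. AE \<omega> in M. \<bar>X \<omega>\<bar> \<le> C)"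

definition bank :: "(nat \<Rightarrow> 'a \<Rightarrow> real) \<Rightarrow> nat \<Rightarrow> 'a \<Rightarrow> real" where
  "bank r t \<omega> = (\<Prod>k\<in>{1..t}. 1 + r k \<omega>)"

definition admissible ::
  "'a measure \<Rightarrow> (nat \<Rightarrow> 'a measure) \<Rightarrow> nat \<Rightarrow> (nat \<Rightarrow> 'a \<Rightarrow> real) \<Rightarrow> ('a \<Rightarrow> real)
     \<Rightarrow> (nat \<Rightarrow> 'a \<Rightarrow> real) set" where
  "admissible M F T r W =
     {Y. (\<forall>t\<in>{1..T}. Y t \<in> borel_measurable (F t) \<and> Linf M (F T) (Y t)) \<and>
         (AE \<omega> in M. (\<Sum>t\<in>{1..T}. Y t \<omega> / bank r t \<omega>) = W \<omega>)}"

definition Uval ::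
  "'a measure \<Rightarrow> (nat \<Rightarrow> 'a measure) \<Rightarrow> nat \<Rightarrow> (nat \<Rightarrow> 'a \<Rightarrow> real) \<Rightarrow> (nat \<Rightarrow> real \<Rightarrow> real)
     \<Rightarrow> ('a \<Rightarrow> real) \<Rightarrow> real" where
  "Uval M F T r u W =
     Sup {(\<Sum>t\<in>{1..T}. integral\<^sup>L M (\<lambda>\<omega>. u t (Y t \<omega> / bank r t \<omega>))) | Y. Y \<in> admissible M F T r W}"

definition exp_util :: "(nat \<Rightarrow> real) \<Rightarrow> nat \<Rightarrow> real \<Rightarrow> real" where
  "exp_util \<alpha> t x = (1 / \<alpha> t) * (1 - exp (- \<alpha> t * x))"

definition beta :: "nat \<Rightarrow> (nat \<Rightarrow> real) \<Rightarrow> nat \<Rightarrow> real" where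
  "beta T \<alpha> t = 1 / (\<Sum>k\<in>{t..T}. 1 / \<alpha> k)"

text \<open>Laux n = L_{T-n}: Laux 0 = exp(-alpha_T W),
  L_{t-1} = E_{t-1}[L_t] powr (beta_{t-1}/beta_t).\<close>
fun Laux :: "'a measure \<Rightarrow> (nat \<Rightarrow> 'a measure) \<Rightarrow> nat \<Rightarrow> (nat \<Rightarrow> real) \<Rightarrow> ('a \<Rightarrow> real)
     \<Rightarrow> nat \<Rightarrow> 'a \<Rightarrow> real" where
  "Laux M F T \<alpha> W 0 = (\<lambda>\<omega>. exp (- \<alpha> T * W \<omega>))"
| "Laux M F T \<alpha> W (Suc n) =
     (\<lambda>\<omega>. (real_cond_exp M (F (T - Suc n)) (Laux M F T \<alpha> W n) \<omega>)
            powr (beta T \<alpha> (T - Suc n) / beta T \<alpha> (T - n)))"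

definition Lfun :: "'a measure \<Rightarrow> (nat \<Rightarrow> 'a measure) \<Rightarrow> nat \<Rightarrow> (nat \<Rightarrow> real) \<Rightarrow> nat
     \<Rightarrow> ('a \<Rightarrow> real) \<Rightarrow> 'a \<Rightarrow> real" where
  "Lfun M F T \<alpha> t W = Laux M F T \<alpha> W (T - t)"

end

theory Submission imports Defs begin

definition bm :: "'a measure \<Rightarrow> ('a \<Rightarrow> real) \<Rightarrow> bool" where
  "bm M X \<longleftrightarrow> X \<in> borel_measurable M \<and> (\<exists>C. AE \<omega> in M. \<bar>X \<omega>\<bar> \<le> C)"

lemma bm_const[simp]: "bm M (\<lambda>_. c)"
  unfolding bm_def by auto

lemma bm_add: "bm M X \<Longrightarrow> bm M Y \<Longrightarrow> bm M (\<lambda>\<omega>. X \<omega> + Y \<omega>)"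
  unfolding bm_def
proof (elim conjE exE, intro conjI)
  fix C D assume "AE \<omega> in M. \<bar>X \<omega>\<bar> \<le> C" "AE \<omega> in M. \<bar>Y \<omega>\<bar> \<le> D"
  then show "\<exists>C. AE \<omega> in M. \<bar>X \<omega> + Y \<omega>\<bar> \<le> C"
  proof (intro exI[of _ "C+D"])
    show "AE \<omega> in M. \<bar>X \<omega> + Y \<omega>\<bar> \<le> C + D"
      using \<open>AE \<omega> in M. \<bar>X \<omega>\<bar> \<le> C\<close> \<open>AE \<omega> in M. \<bar>Y \<omega>\<bar> \<le> D\<close> by eventually_elim linarith
  qed
qed measurable

lemma bm_mult: "bm M X \<Longrightarrow> bm M Y \<Longrightarrow> bm M (\<lambda>\<omega>. X \<omega> * Y \<omega>)"
  unfolding bm_def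
proof (elim conjE exE, intro conjI)
  fix C D assume "AE \<omega> in M. \<bar>X \<omega>\<bar> \<le> C" "AE \<omega> in M. \<bar>Y \<omega>\<bar> \<le> D"
  then show "\<exists>C. AE \<omega> in M. \<bar>X \<omega> * Y \<omega>\<bar> \<le> C"
  proof (intro exI[of _ "C*D"])
    show "AE \<omega> in M. \<bar>X \<omega> * Y \<omega>\<bar> \<le> C * D"
      using \<open>AE \<omega> in M. \<bar>X \<omega>\<bar> \<le> C\<close> \<open>AE \<omega> in M. \<bar>Y \<omega>\<bar> \<le> D\<close> by eventually_elim (simp add: abs_mult mult_mono')
  qed
qed measurable

lemma bm_minus: "bm M X \<Longrightarrow> bm M (\<lambda>\<omega>. - X \<omega>)"
  unfolding bm_def by auto

lemma bm_diff: "bm M X \<Longrightarrow> bm M Y \<Longrightarrow> bm M (\<lambda>\<omega>. X \<omega> - Y \<omega>)"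
  using bm_add[of M X "\<lambda>\<omega>. - Y \<omega>"] bm_minus[of M Y] by simp

lemma bm_exp: "bm M X \<Longrightarrow> bm M (\<lambda>\<omega>. exp (X \<omega>))"
  unfolding bm_def
proof (elim conjE exE, intro conjI)
  fix C assume "AE \<omega> in M. \<bar>X \<omega>\<bar> \<le> C"
  then show "\<exists>C. AE \<omega> in M. \<bar>exp (X \<omega>)\<bar> \<le> C"
  proof (intro exI[of _ "exp C"])
    show "AE \<omega> in M. \<bar>exp (X \<omega>)\<bar> \<le> exp C"
      using \<open>AE \<omega> in M. \<bar>X \<omega>\<bar> \<le> C\<close> by eventually_elim simp
  qed
qed measurable

lemma bm_integrable: "prob_space M \<Longrightarrow> bm M X \<Longrightarrow> integrable M X"
proof -
  assume "prob_space M" "bm M X"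
  then interpret prob_space M by simp
  from \<open>bm M X\<close> obtain C where "X \<in> borel_measurable M" "AE \<omega> in M. \<bar>X \<omega>\<bar> \<le> C"
    unfolding bm_def by blast
  then show "integrable M X" by (intro integrable_const_bound[where B=C]) auto
qed

lemma bm_cong: "bm M X \<Longrightarrow> Y \<in> borel_measurable M \<Longrightarrow> AE \<omega> in M. X \<omega> = Y \<omega> \<Longrightarrow> bm M Y"
  unfolding bm_def
proof (elim conjE exE, intro conjI)
  fix C assume "AE \<omega> in M. \<bar>X \<omega>\<bar> \<le> C" "AE \<omega> in M. X \<omega> = Y \<omega>"
  then show "\<exists>C. AE \<omega> in M. \<bar>Y \<omega>\<bar> \<le> C"
  proof (intro exI[of _ C])
    show "AE \<omega> in M. \<bar>Y \<omega>\<bar> \<le> C"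
      using \<open>AE \<omega> in M. \<bar>X \<omega>\<bar> \<le> C\<close> \<open>AE \<omega> in M. X \<omega> = Y \<omega>\<close> by eventually_elim simp
  qed
qed measurable


lemma key_ineq:
  fixes a b' bb G S c :: real
  assumes a: "0 < a" and b': "0 < b'" and bb: "1 / bb = 1 / a + 1 / b'" and G: "0 < G"
  shows "(1 / a) * (1 - exp (- a * c)) + (1 / b') * (1 - exp (b' * (S + c)) * G)
         \<le> (1 / bb) * (1 - G powr (bb / b') * exp (bb * S))"
proof -
  have bbpos: "0 < bb" using bb a b'
    by (metis add_pos_pos divide_pos_pos zero_less_divide_1_iff)
  define p where "p = bb / a"
  define q where "q = bb / b'"
  have pq: "p + q = 1" unfolding p_def q_def
    by (metis bb bbpos divide_inverse_commute inverse_eq_divide less_irrefl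
        nonzero_mult_div_cancel_left distrib_left times_divide_eq_right mult.commute)
  have p0: "0 \<le> p" "0 \<le> q" unfolding p_def q_def using a b' bbpos by auto
  define X where "X = exp (- a * c)"
  define Y where "Y = exp (b' * (S + c)) * G"
  have XY: "0 < X" "0 < Y" unfolding X_def Y_def using G by auto
  have "X powr p * Y powr q \<le> p * X + q * Y"
    by (rule Youngs_inequality_0) (use p0 pq XY in auto)
  moreover have "X powr p = exp (- bb * c)"
    unfolding X_def p_def powr_def using a by (simp add: field_simps)
  moreover have "Y powr q = exp (bb * (S + c)) * G powr q"
  proof -
    have "Y powr q = exp (q * ln Y)" using XY by (simp add: powr_def)
    also have "ln Y = b' * (S + c) + ln G" unfolding Y_def using G by (simp add: ln_mult)
    also have "exp (q * (b' * (S + c) + ln G)) = exp (bb * (S + c)) * exp (q * ln G)"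
      unfolding q_def using b' by (simp add: field_simps flip: exp_add)
    also have "exp (q * ln G) = G powr q" using G by (simp add: powr_def)
    finally show ?thesis .
  qed
  ultimately have "G powr q * exp (bb * S) \<le> p * X + q * Y"
    by (simp add: algebra_simps flip: exp_add)
  then have "(1 / bb) * (G powr q * exp (bb * S)) \<le> (1 / bb) * (p * X + q * Y)"
    using bbpos by (intro mult_left_mono) auto
  also have "(1 / bb) * (p * X + q * Y) = (1 / a) * X + (1 / b') * Y"
    unfolding p_def q_def using bbpos by (simp add: field_simps)
  finally have *: "(1 / bb) * (G powr q * exp (bb * S)) \<le> (1 / a) * X + (1 / b') * Y" .
  have "(1 / a) * (1 - X) + (1 / b') * (1 - Y) = (1 / a + 1 / b') - ((1 / a) * X + (1 / b') * Y)"
    using a b' by (simp add: field_simps)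
  also have "\<dots> \<le> (1 / bb) - (1 / bb) * (G powr q * exp (bb * S))" using * bb by linarith
  also have "\<dots> = (1 / bb) * (1 - G powr q * exp (bb * S))" by (simp add: algebra_simps)
  finally show ?thesis unfolding X_def Y_def q_def .
qed

lemma key_eq:
  fixes a b' bb G S :: real
  assumes a: "0 < a" and b': "0 < b'" and bb: "1 / bb = 1 / a + 1 / b'" and G: "0 < G"
  defines "c \<equiv> - (ln G + b' * S) / (a + b')"
  shows "(1 / a) * (1 - exp (- a * c)) + (1 / b') * (1 - exp (b' * (S + c)) * G)
         = (1 / bb) * (1 - G powr (bb / b') * exp (bb * S))"
proof -
  have "1 / bb = (a + b') / (a * b')" using bb a b' by (simp add: field_simps)
  then have bbv: "bb = a * b' / (a + b')"
  proof -
    assume h: "1 / bb = (a + b') / (a * b')"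
    have "bb = 1 / (1 / bb)" by simp
    also have "\<dots> = a * b' / (a + b')" unfolding h by simp
    finally show ?thesis .
  qed
  have ab: "0 < a + b'" using a b' by simp
  have e1: "exp (b' * (S + c)) * G = exp (- a * c)"
  proof -
    have "exp (b' * (S + c)) * G = exp (b' * (S + c) + ln G)" using G by (simp add: exp_add)
    also have "b' * (S + c) + ln G = - a * c" unfolding c_def using ab by (simp add: field_simps)
    finally show ?thesis .
  qed
  have e2: "G powr (bb / b') * exp (bb * S) = exp (- a * c)"
  proof -
    have "G powr (bb / b') * exp (bb * S) = exp (bb / b' * ln G + bb * S)"
      using G by (simp add: powr_def exp_add)
    also have "bb / b' * ln G + bb * S = - a * c"
    proof -
      have q: "bb / b' = a / (a + b')" unfolding bbv using b' ab by simp
      have ne: "a + b' \<noteq> 0" using ab by simp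
      have q2: "bb * S = a / (a + b') * (b' * S)" unfolding bbv by simp
      have "a / (a + b') * ln G + a / (a + b') * (b' * S) = a / (a + b') * (ln G + b' * S)"
        by (simp add: distrib_left)
      moreover have "- a * (- (ln G + b' * S) / (a + b')) = a / (a + b') * (ln G + b' * S)"
        using ne by (simp add: field_simps)
      ultimately show ?thesis unfolding q q2 c_def by simp
    qed
    finally show ?thesis .
  qed
  have "(1 / a) * (1 - exp (- a * c)) + (1 / b') * (1 - exp (- a * c))
        = (1 / a + 1 / b') * (1 - exp (- a * c))" by (simp add: distrib_right)
  then show ?thesis unfolding e1 e2 bb[symmetric] .
qed

locale es = prob_space M for M :: "'a measure" +
  fixes F :: "nat \<Rightarrow> 'a measure" and T :: nat and \<alpha> :: "nat \<Rightarrow> real"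
  assumes T1: "1 \<le> T"
    and sub: "\<And>t. t \<le> T \<Longrightarrow> subalgebra M (F t)"
    and mono: "\<And>s t. s \<le> t \<Longrightarrow> t \<le> T \<Longrightarrow> sets (F s) \<subseteq> sets (F t)"
    and apos: "\<And>t. 1 \<le> t \<Longrightarrow> t \<le> T \<Longrightarrow> 0 < \<alpha> t"
begin

abbreviation bt where "bt t \<equiv> beta T \<alpha> t"
abbreviation L where "L t W \<equiv> Lfun M F T \<alpha> t W"
abbreviation u where "u \<equiv> exp_util \<alpha>"

lemma sfs: "t \<le> T \<Longrightarrow> sigma_finite_subalgebra M (F t)"
  apply (rule finite_measure_subalgebra_is_sigma_finite)
  using sub by (simp add: finite_measure_subalgebra_axioms_def finite_measure_subalgebra_def finite_measure_axioms)

lemma meas_M: "t \<le> T \<Longrightarrow> X \<in> borel_measurable (F t) \<Longrightarrow> X \<in> borel_measurable M"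
  using measurable_from_subalg sub by blast

lemma meas_mono: "s \<le> t \<Longrightarrow> t \<le> T \<Longrightarrow> X \<in> borel_measurable (F s) \<Longrightarrow> X \<in> borel_measurable (F t)"
  using measurable_mono[of borel borel "F s" "F t"] mono sub[of s] sub[of t]
  by (auto simp: subalgebra_def)

lemma bt_pos: "1 \<le> t \<Longrightarrow> t \<le> T \<Longrightarrow> 0 < bt t"
proof -
  assume "1 \<le> t" "t \<le> T"
  have "0 < (\<Sum>k\<in>{t..T}. 1 / \<alpha> k)"
    using \<open>t \<le> T\<close> \<open>1 \<le> t\<close> apos by (intro sum_pos) auto
  then show ?thesis unfolding beta_def by simp
qed

lemma bt_T: "bt T = \<alpha> T"
  unfolding beta_def by simp

lemma bt_rec: "1 \<le> t \<Longrightarrow> t < T \<Longrightarrow> 1 / bt t = 1 / \<alpha> t + 1 / bt (Suc t)"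
  unfolding beta_def by (simp add: sum.atLeast_Suc_atMost)

lemma L_T: "L T W = (\<lambda>\<omega>. exp (- \<alpha> T * W \<omega>))"
  unfolding Lfun_def by simp

lemma L_step: "t < T \<Longrightarrow> L t W = (\<lambda>\<omega>. real_cond_exp M (F t) (L (Suc t) W) \<omega> powr (bt t / bt (Suc t)))"
proof -
  assume "t < T"
  then have e: "T - t = Suc (T - Suc t)" by simp
  have "T - Suc (T - Suc t) = t" "T - (T - Suc t) = Suc t" using \<open>t < T\<close> by auto
  then show ?thesis unfolding Lfun_def e by simp
qed


lemma bdd_integrable: "(X :: 'a \<Rightarrow> real) \<in> borel_measurable M \<Longrightarrow> AE \<omega> in M. \<bar>X \<omega>\<bar> \<le> (C::real) \<Longrightarrow> integrable M X"
  by (intro integrable_const_bound[where B=C]) auto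

lemma L_props:
  assumes W: "W \<in> borel_measurable (F T)" "AE \<omega> in M. \<bar>W \<omega>\<bar> \<le> C"
    and t: "1 \<le> t" "t \<le> T"
  shows "L t W \<in> borel_measurable (F t) \<and> (\<exists>a b. 0 < a \<and> (AE \<omega> in M. a \<le> L t W \<omega> \<and> L t W \<omega> \<le> b))"
  using t(2)
proof (induction t rule: inc_induct)
  case base
  have aT: "0 < \<alpha> T" using apos T1 by simp
  have "AE \<omega> in M. exp (- \<alpha> T * C) \<le> L T W \<omega> \<and> L T W \<omega> \<le> exp (\<alpha> T * C)"
    using W(2)
  proof eventually_elim
    case (elim \<omega>)
    then have "- C \<le> W \<omega>" "W \<omega> \<le> C" by auto
    then have "\<alpha> T * W \<omega> \<le> \<alpha> T * C" "\<alpha> T * (- C) \<le> \<alpha> T * W \<omega>"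
      using aT by (intro mult_left_mono; simp)+
    then have "- \<alpha> T * C \<le> - \<alpha> T * W \<omega>" "- \<alpha> T * W \<omega> \<le> \<alpha> T * C"
      by simp_all
    then show ?case unfolding L_T by simp
  qed
  moreover have "L T W \<in> borel_measurable (F T)" unfolding L_T using W(1) by measurable
  ultimately show ?case by (intro conjI exI[of _ "exp (- \<alpha> T * C)"] exI[of _ "exp (\<alpha> T * C)"]) auto
next
  case (step n)
  then obtain a b where ab: "0 < a" "AE \<omega> in M. a \<le> L (Suc n) W \<omega> \<and> L (Suc n) W \<omega> \<le> b"
    and mS: "L (Suc n) W \<in> borel_measurable (F (Suc n))" by blast
  interpret S: sigma_finite_subalgebra M "F n" using sfs step by simp
  have mM: "L (Suc n) W \<in> borel_measurable M" using meas_M[OF _ mS] step by simp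
  have "AE \<omega> in M. \<bar>L (Suc n) W \<omega>\<bar> \<le> b" using ab(2) by eventually_elim (insert ab(1), auto)
  then have int: "integrable M (L (Suc n) W)" using bdd_integrable mM by blast
  have ge: "AE \<omega> in M. a \<le> real_cond_exp M (F n) (L (Suc n) W) \<omega>"
    by (rule S.real_cond_exp_ge_c[OF int]) (use ab(2) in auto)
  have le: "AE \<omega> in M. real_cond_exp M (F n) (L (Suc n) W) \<omega> \<le> b"
    by (rule S.real_cond_exp_le_c[OF int]) (use ab(2) in auto)
  define q where "q = bt n / bt (Suc n)"
  have q: "0 < q" unfolding q_def using bt_pos step t by simp
  have eq: "L n W = (\<lambda>\<omega>. real_cond_exp M (F n) (L (Suc n) W) \<omega> powr q)"
    unfolding q_def using L_step step by simp
  have "AE \<omega> in M. a powr q \<le> L n W \<omega> \<and> L n W \<omega> \<le> b powr q"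
    using ge le
  proof eventually_elim
    case (elim \<omega>)
    then show ?case unfolding eq using q ab(1) by (auto intro!: powr_mono2)
  qed
  moreover have "L n W \<in> borel_measurable (F n)" unfolding eq by measurable
  ultimately show ?case using ab(1) by (intro conjI exI[of _ "a powr q"] exI[of _ "b powr q"]) auto
qed

lemma L_bm:
  assumes W: "W \<in> borel_measurable (F T)" "AE \<omega> in M. \<bar>W \<omega>\<bar> \<le> C"
    and t: "1 \<le> t" "t \<le> T"
  shows "bm M (L t W)"
proof -
  obtain a b where ab: "0 < a" "AE \<omega> in M. a \<le> L t W \<omega> \<and> L t W \<omega> \<le> b"
    and m: "L t W \<in> borel_measurable (F t)" using L_props[OF W t] by blast
  have "AE \<omega> in M. \<bar>L t W \<omega>\<bar> \<le> b" using ab(2) by eventually_elim (insert ab(1), auto)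
  then show ?thesis unfolding bm_def using meas_M[OF t(2) m] by blast
qed


lemma bmI: "bm M X \<Longrightarrow> integrable M X"
  using bm_integrable prob_space_axioms by blast

lemma bm_M: "bm M X \<Longrightarrow> X \<in> borel_measurable M"
  unfolding bm_def by blast

lemma int_aff0: "integrable M (g :: 'a \<Rightarrow> real) \<Longrightarrow> (\<integral>\<omega>. k * (1 - g \<omega>) \<partial>M) = k * (1 - integral\<^sup>L M g)"
proof -
  assume g: "integrable M g"
  have "(\<integral>\<omega>. k * (1 - g \<omega>) \<partial>M) = k * (\<integral>\<omega>. 1 - g \<omega> \<partial>M)" by (rule integral_mult_right_zero)
  also have "(\<integral>\<omega>. 1 - g \<omega> \<partial>M) = (\<integral>\<omega>. 1 \<partial>M) - integral\<^sup>L M g"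
    by (rule Bochner_Integration.integral_diff) (auto simp: g)
  also have "(\<integral>\<omega>. 1 \<partial>M) = (1::real)" by (simp add: prob_space)
  finally show ?thesis .
qed

lemma int_aff: "integrable M (f :: 'a \<Rightarrow> real) \<Longrightarrow> integrable M (g :: 'a \<Rightarrow> real) \<Longrightarrow>
    (\<integral>\<omega>. f \<omega> + k * (1 - g \<omega>) \<partial>M) = integral\<^sup>L M f + k * (1 - integral\<^sup>L M g)"
proof -
  assume f: "integrable M f" and g: "integrable M g"
  have "integrable M (\<lambda>\<omega>. k * (1 - g \<omega>))" using g by auto
  then have "(\<integral>\<omega>. f \<omega> + k * (1 - g \<omega>) \<partial>M) = integral\<^sup>L M f + (\<integral>\<omega>. k * (1 - g \<omega>) \<partial>M)"
    by (rule Bochner_Integration.integral_add[OF f])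
  also have "(\<integral>\<omega>. k * (1 - g \<omega>) \<partial>M) = k * (1 - integral\<^sup>L M g)" by (rule int_aff0[OF g])
  finally show ?thesis .
qed

lemma bm_u: "bm M X \<Longrightarrow> bm M (\<lambda>\<omega>. u s (X \<omega>))"
  unfolding exp_util_def
  by (intro bm_mult bm_const bm_diff bm_exp bm_minus) (auto intro: bm_mult)

lemma G_props:
  assumes W: "W \<in> borel_measurable (F T)" "AE \<omega> in M. \<bar>W \<omega>\<bar> \<le> C"
    and n: "1 \<le> n" "n < T"
  shows "bm M (real_cond_exp M (F n) (L (Suc n) W)) \<and>
    (\<exists>a. 0 < a \<and> (AE \<omega> in M. a \<le> real_cond_exp M (F n) (L (Suc n) W) \<omega>))"
proof -
  obtain a b where ab: "0 < a" "AE \<omega> in M. a \<le> L (Suc n) W \<omega> \<and> L (Suc n) W \<omega> \<le> b"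
    and mS: "L (Suc n) W \<in> borel_measurable (F (Suc n))" using L_props[OF W, of "Suc n"] n by auto
  interpret S: sigma_finite_subalgebra M "F n" using sfs n by simp
  have int: "integrable M (L (Suc n) W)" using L_bm[OF W, of "Suc n"] n bmI by simp
  have ge: "AE \<omega> in M. a \<le> real_cond_exp M (F n) (L (Suc n) W) \<omega>"
    by (rule S.real_cond_exp_ge_c[OF int]) (use ab(2) in auto)
  have le: "AE \<omega> in M. real_cond_exp M (F n) (L (Suc n) W) \<omega> \<le> b"
    by (rule S.real_cond_exp_le_c[OF int]) (use ab(2) in auto)
  have "AE \<omega> in M. \<bar>real_cond_exp M (F n) (L (Suc n) W) \<omega>\<bar> \<le> b"
    using ge le by eventually_elim (insert ab(1), auto)
  then have "bm M (real_cond_exp M (F n) (L (Suc n) W))" unfolding bm_def by auto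
  then show ?thesis using ge ab(1) by blast
qed

lemma UB:
  assumes W: "W \<in> borel_measurable (F T)" "AE \<omega> in M. \<bar>W \<omega>\<bar> \<le> C"
    and t: "1 \<le> t" "t \<le> T"
  shows "\<And>S c. S \<in> borel_measurable (F (t - 1)) \<Longrightarrow> bm M S \<Longrightarrow>
     (\<And>s. s \<in> {t..T} \<Longrightarrow> c s \<in> borel_measurable (F s) \<and> bm M (c s)) \<Longrightarrow>
     AE \<omega> in M. S \<omega> + (\<Sum>s\<in>{t..T}. c s \<omega>) = W \<omega> \<Longrightarrow>
     (\<Sum>s\<in>{t..T}. \<integral>\<omega>. u s (c s \<omega>) \<partial>M) \<le> (1 / bt t) * (1 - \<integral>\<omega>. L t W \<omega> * exp (bt t * S \<omega>) \<partial>M)"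
  using t(2) t(1)
proof (induction t rule: inc_induct)
  case base
  fix S c
  assume S: "S \<in> borel_measurable (F (T - 1))" "bm M S"
    and cs: "\<And>s. s \<in> {T..T} \<Longrightarrow> c s \<in> borel_measurable (F s) \<and> bm M (c s)"
    and sum: "AE \<omega> in M. S \<omega> + (\<Sum>s\<in>{T..T}. c s \<omega>) = W \<omega>"
  have cT: "bm M (c T)" using cs by auto
  have "AE \<omega> in M. u T (c T \<omega>) = (1 / bt T) * (1 - L T W \<omega> * exp (bt T * S \<omega>))"
    using sum
  proof eventually_elim
    case (elim \<omega>)
    then have e: "c T \<omega> = W \<omega> - S \<omega>" by simp
    show ?case unfolding exp_util_def L_T bt_T e by (simp add: algebra_simps flip: exp_add)
  qed
  then have "(\<integral>\<omega>. u T (c T \<omega>) \<partial>M) = (\<integral>\<omega>. (1 / bt T) * (1 - L T W \<omega> * exp (bt T * S \<omega>)) \<partial>M)"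
    using bm_M[OF bm_u[OF cT]] bm_M[OF L_bm[OF W, of T]] bm_M[OF S(2)] T1
    by (intro integral_cong_AE) auto
  also have "\<dots> = (1 / bt T) * (1 - \<integral>\<omega>. L T W \<omega> * exp (bt T * S \<omega>) \<partial>M)"
    by (intro int_aff0 bmI bm_mult bm_exp L_bm[OF W] bm_mult[OF bm_const S(2)]) (use T1 in auto)
  finally show "(\<Sum>s\<in>{T..T}. \<integral>\<omega>. u s (c s \<omega>) \<partial>M) \<le> (1 / bt T) * (1 - \<integral>\<omega>. L T W \<omega> * exp (bt T * S \<omega>) \<partial>M)"
    by simp
next
  case (step n)
  fix S c
  assume S: "S \<in> borel_measurable (F (n - 1))" "bm M S"
    and cs: "\<And>s. s \<in> {n..T} \<Longrightarrow> c s \<in> borel_measurable (F s) \<and> bm M (c s)"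
    and sum: "AE \<omega> in M. S \<omega> + (\<Sum>s\<in>{n..T}. c s \<omega>) = W \<omega>"
  have n: "1 \<le> n" "n < T" using step by auto
  define b' where "b' = bt (Suc n)"
  define G where "G = real_cond_exp M (F n) (L (Suc n) W)"
  define S' where "S' = (\<lambda>\<omega>. S \<omega> + c n \<omega>)"
  have b'pos: "0 < b'" unfolding b'_def using bt_pos n by simp
  have an: "0 < \<alpha> n" using apos n by simp
  have rec: "1 / bt n = 1 / \<alpha> n + 1 / b'" unfolding b'_def using bt_rec n by simp
  have Lq: "L n W = (\<lambda>\<omega>. G \<omega> powr (bt n / b'))" unfolding G_def b'_def using L_step n by simp
  obtain a where a: "0 < a" "AE \<omega> in M. a \<le> G \<omega>" and Gbm: "bm M G"
    using G_props[OF W n] unfolding G_def by blast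
  have cn: "c n \<in> borel_measurable (F n)" "bm M (c n)" using cs n by auto
  have SFn: "S \<in> borel_measurable (F n)" using meas_mono[OF _ _ S(1), of n] n by simp
  have hS': "S' \<in> borel_measurable (F (Suc n - 1))" unfolding S'_def using SFn cn by simp
  have bmS': "bm M S'" unfolding S'_def using S(2) cn by (intro bm_add)
  have csuc: "\<And>s. s \<in> {Suc n..T} \<Longrightarrow> c s \<in> borel_measurable (F s) \<and> bm M (c s)"
    using cs by auto
  have split: "\<And>f::nat \<Rightarrow> real. (\<Sum>s\<in>{n..T}. f s) = f n + (\<Sum>s\<in>{Suc n..T}. f s)"
    using n by (intro sum.atLeast_Suc_atMost) simp
  have AE': "AE \<omega> in M. S' \<omega> + (\<Sum>s\<in>{Suc n..T}. c s \<omega>) = W \<omega>"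
    using sum by eventually_elim (simp add: S'_def split[of "\<lambda>s. c s _"] algebra_simps)
  have IH: "(\<Sum>s\<in>{Suc n..T}. \<integral>\<omega>. u s (c s \<omega>) \<partial>M) \<le> (1 / b') * (1 - \<integral>\<omega>. L (Suc n) W \<omega> * exp (b' * S' \<omega>) \<partial>M)"
    unfolding b'_def using step.IH[OF hS' bmS' csuc AE'] n by simp
  interpret SF: sigma_finite_subalgebra M "F n" using sfs n by simp
  have fF: "(\<lambda>\<omega>. exp (b' * S' \<omega>)) \<in> borel_measurable (F n)" using hS' by simp
  have LM: "L (Suc n) W \<in> borel_measurable M" using bm_M[OF L_bm[OF W, of "Suc n"]] n by simp
  have intfg: "integrable M (\<lambda>\<omega>. exp (b' * S' \<omega>) * L (Suc n) W \<omega>)"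
    using n by (intro bmI bm_mult bm_exp bm_mult[OF bm_const bmS'] L_bm[OF W]) auto
  have Intg: "(\<integral>\<omega>. L (Suc n) W \<omega> * exp (b' * S' \<omega>) \<partial>M) = (\<integral>\<omega>. exp (b' * S' \<omega>) * G \<omega> \<partial>M)"
    unfolding G_def using SF.real_cond_exp_intg(2)[OF intfg fF LM] by (simp add: mult.commute)
  have intG: "integrable M (\<lambda>\<omega>. exp (b' * S' \<omega>) * G \<omega>)"
    unfolding G_def using SF.real_cond_exp_intg(1)[OF intfg fF LM] .
  have intu: "integrable M (\<lambda>\<omega>. u n (c n \<omega>))" using bm_u[OF cn(2)] bmI by blast
  have intR: "integrable M (\<lambda>\<omega>. L n W \<omega> * exp (bt n * S \<omega>))"
    using n by (intro bmI bm_mult bm_exp bm_mult[OF bm_const S(2)] L_bm[OF W]) auto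
  have ptw: "AE \<omega> in M. u n (c n \<omega>) + (1 / b') * (1 - exp (b' * S' \<omega>) * G \<omega>)
      \<le> (1 / bt n) * (1 - L n W \<omega> * exp (bt n * S \<omega>))"
    using a(2)
  proof eventually_elim
    case (elim \<omega>)
    then have "0 < G \<omega>" using a(1) by simp
    from key_ineq[OF an b'pos rec this, where S = "S \<omega>" and c = "c n \<omega>"]
    show ?case unfolding exp_util_def Lq S'_def by simp
  qed
  have "(\<Sum>s\<in>{n..T}. \<integral>\<omega>. u s (c s \<omega>) \<partial>M)
      = (\<integral>\<omega>. u n (c n \<omega>) \<partial>M) + (\<Sum>s\<in>{Suc n..T}. \<integral>\<omega>. u s (c s \<omega>) \<partial>M)" by (rule split)
  also have "\<dots> \<le> (\<integral>\<omega>. u n (c n \<omega>) \<partial>M) + (1 / b') * (1 - \<integral>\<omega>. exp (b' * S' \<omega>) * G \<omega> \<partial>M)"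
    using IH Intg by simp
  also have "\<dots> = (\<integral>\<omega>. u n (c n \<omega>) + (1 / b') * (1 - exp (b' * S' \<omega>) * G \<omega>) \<partial>M)"
    by (rule int_aff[OF intu intG, symmetric])
  also have "\<dots> \<le> (\<integral>\<omega>. (1 / bt n) * (1 - L n W \<omega> * exp (bt n * S \<omega>)) \<partial>M)"
    by (rule integral_mono_AE[OF _ _ ptw]) (use intu intG intR in auto)
  also have "\<dots> = (1 / bt n) * (1 - \<integral>\<omega>. L n W \<omega> * exp (bt n * S \<omega>) \<partial>M)"
    by (rule int_aff0[OF intR])
  finally show "(\<Sum>s\<in>{n..T}. \<integral>\<omega>. u s (c s \<omega>) \<partial>M) \<le> (1 / bt n) * (1 - \<integral>\<omega>. L n W \<omega> * exp (bt n * S \<omega>) \<partial>M)" .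
qed


lemma bm_ln: "bm M X \<Longrightarrow> 0 < a \<Longrightarrow> AE \<omega> in M. a \<le> X \<omega> \<Longrightarrow> bm M (\<lambda>\<omega>. ln (X \<omega>))"
proof -
  assume X: "bm M X" and a: "0 < a" and ge: "AE \<omega> in M. a \<le> X \<omega>"
  obtain B where B: "AE \<omega> in M. \<bar>X \<omega>\<bar> \<le> B" and m: "X \<in> borel_measurable M"
    using X unfolding bm_def by blast
  have "AE \<omega> in M. \<bar>ln (X \<omega>)\<bar> \<le> \<bar>ln a\<bar> + \<bar>ln B\<bar>"
    using B ge
  proof eventually_elim
    case (elim \<omega>)
    then have h0: "0 < X \<omega>" "X \<omega> \<le> B" using a by auto
    have h1: "ln a \<le> ln (X \<omega>)" using elim a by simp
    have h2: "ln (X \<omega>) \<le> ln B" using h0 by simp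
    show ?case using h1 h2 by arith
  qed
  then show ?thesis unfolding bm_def using m by auto
qed

lemma W_bm: "W \<in> borel_measurable (F T) \<Longrightarrow> AE \<omega> in M. \<bar>W \<omega>\<bar> \<le> C \<Longrightarrow> bm M W"
  unfolding bm_def using meas_M[of T W] by blast

lemma EX:
  assumes W: "W \<in> borel_measurable (F T)" "AE \<omega> in M. \<bar>W \<omega>\<bar> \<le> C"
    and t: "1 \<le> t" "t \<le> T"
  shows "\<And>S. S \<in> borel_measurable (F (t - 1)) \<Longrightarrow> bm M S \<Longrightarrow>
     \<exists>c. (\<forall>s\<in>{t..T}. c s \<in> borel_measurable (F s) \<and> bm M (c s)) \<and>
       (AE \<omega> in M. S \<omega> + (\<Sum>s\<in>{t..T}. c s \<omega>) = W \<omega>) \<and>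
       (\<Sum>s\<in>{t..T}. \<integral>\<omega>. u s (c s \<omega>) \<partial>M) = (1 / bt t) * (1 - \<integral>\<omega>. L t W \<omega> * exp (bt t * S \<omega>) \<partial>M)"
  using t(2) t(1)
proof (induction t rule: inc_induct)
  case base
  fix S
  assume S: "S \<in> borel_measurable (F (T - 1))" "bm M S"
  define c where "c = (\<lambda>(s::nat) \<omega>. W \<omega> - S \<omega>)"
  have SFT: "S \<in> borel_measurable (F T)" using meas_mono[OF _ _ S(1), of T] by simp
  have cT: "bm M (c T)" unfolding c_def using W_bm[OF W] S(2) by (intro bm_diff)
  have "(\<integral>\<omega>. u T (c T \<omega>) \<partial>M) = (\<integral>\<omega>. (1 / bt T) * (1 - L T W \<omega> * exp (bt T * S \<omega>)) \<partial>M)"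
    unfolding c_def exp_util_def L_T bt_T by (simp add: algebra_simps flip: exp_add)
  also have "\<dots> = (1 / bt T) * (1 - \<integral>\<omega>. L T W \<omega> * exp (bt T * S \<omega>) \<partial>M)"
    by (intro int_aff0 bmI bm_mult bm_exp L_bm[OF W] bm_mult[OF bm_const S(2)]) (use T1 in auto)
  finally have "(\<Sum>s\<in>{T..T}. \<integral>\<omega>. u s (c s \<omega>) \<partial>M) = (1 / bt T) * (1 - \<integral>\<omega>. L T W \<omega> * exp (bt T * S \<omega>) \<partial>M)"
    by simp
  moreover have "\<forall>s\<in>{T..T}. c s \<in> borel_measurable (F s) \<and> bm M (c s)"
    using cT W(1) SFT unfolding c_def by auto
  moreover have "AE \<omega> in M. S \<omega> + (\<Sum>s\<in>{T..T}. c s \<omega>) = W \<omega>" unfolding c_def by simp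
  ultimately show "\<exists>c. (\<forall>s\<in>{T..T}. c s \<in> borel_measurable (F s) \<and> bm M (c s)) \<and>
       (AE \<omega> in M. S \<omega> + (\<Sum>s\<in>{T..T}. c s \<omega>) = W \<omega>) \<and>
       (\<Sum>s\<in>{T..T}. \<integral>\<omega>. u s (c s \<omega>) \<partial>M) = (1 / bt T) * (1 - \<integral>\<omega>. L T W \<omega> * exp (bt T * S \<omega>) \<partial>M)"
    by blast
next
  case (step n)
  fix S
  assume S: "S \<in> borel_measurable (F (n - 1))" "bm M S"
  have n: "1 \<le> n" "n < T" using step by auto
  define b' where "b' = bt (Suc n)"
  define G where "G = real_cond_exp M (F n) (L (Suc n) W)"
  define ch where "ch = (\<lambda>\<omega>. (- 1 / (\<alpha> n + b')) * (ln (G \<omega>) + b' * S \<omega>))"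
  define S' where "S' = (\<lambda>\<omega>. S \<omega> + ch \<omega>)"
  have b'pos: "0 < b'" unfolding b'_def using bt_pos n by simp
  have an: "0 < \<alpha> n" using apos n by simp
  have rec: "1 / bt n = 1 / \<alpha> n + 1 / b'" unfolding b'_def using bt_rec n by simp
  have Lq: "L n W = (\<lambda>\<omega>. G \<omega> powr (bt n / b'))" unfolding G_def b'_def using L_step n by simp
  obtain a where a: "0 < a" "AE \<omega> in M. a \<le> G \<omega>" and Gbm: "bm M G"
    using G_props[OF W n] unfolding G_def by blast
  have SFn: "S \<in> borel_measurable (F n)" using meas_mono[OF _ _ S(1), of n] n by simp
  have GFn: "G \<in> borel_measurable (F n)" unfolding G_def by simp
  have chF: "ch \<in> borel_measurable (F n)" unfolding ch_def using SFn GFn by measurable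
  have chbm: "bm M ch" unfolding ch_def
    by (intro bm_mult bm_const bm_add bm_ln[OF Gbm a(1) a(2)] S(2))
  have hS': "S' \<in> borel_measurable (F (Suc n - 1))" unfolding S'_def using SFn chF by simp
  have bmS': "bm M S'" unfolding S'_def using S(2) chbm by (intro bm_add)
  obtain c' where c'1: "\<forall>s\<in>{Suc n..T}. c' s \<in> borel_measurable (F s) \<and> bm M (c' s)"
    and c'2: "AE \<omega> in M. S' \<omega> + (\<Sum>s\<in>{Suc n..T}. c' s \<omega>) = W \<omega>"
    and c'3: "(\<Sum>s\<in>{Suc n..T}. \<integral>\<omega>. u s (c' s \<omega>) \<partial>M) = (1 / b') * (1 - \<integral>\<omega>. L (Suc n) W \<omega> * exp (b' * S' \<omega>) \<partial>M)"
    using step.IH[OF hS' bmS'] n unfolding b'_def by auto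
  define c where "c = c'(n := ch)"
  have split: "\<And>f::nat \<Rightarrow> real. (\<Sum>s\<in>{n..T}. f s) = f n + (\<Sum>s\<in>{Suc n..T}. f s)"
    using n by (intro sum.atLeast_Suc_atMost) simp
  have ceq2: "\<And>\<omega>. (\<Sum>s\<in>{Suc n..T}. c s \<omega>) = (\<Sum>s\<in>{Suc n..T}. c' s \<omega>)"
    unfolding c_def by (intro sum.cong) auto
  have ceq3: "(\<Sum>s\<in>{Suc n..T}. \<integral>\<omega>. u s (c s \<omega>) \<partial>M) = (\<Sum>s\<in>{Suc n..T}. \<integral>\<omega>. u s (c' s \<omega>) \<partial>M)"
    unfolding c_def by (intro sum.cong) auto
  have P1: "\<forall>s\<in>{n..T}. c s \<in> borel_measurable (F s) \<and> bm M (c s)"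
    using c'1 chF chbm unfolding c_def by auto
  have P2: "AE \<omega> in M. S \<omega> + (\<Sum>s\<in>{n..T}. c s \<omega>) = W \<omega>"
    using c'2 by eventually_elim (simp add: split ceq2 S'_def c_def algebra_simps)
  interpret SF: sigma_finite_subalgebra M "F n" using sfs n by simp
  have fF: "(\<lambda>\<omega>. exp (b' * S' \<omega>)) \<in> borel_measurable (F n)" using hS' by simp
  have LM: "L (Suc n) W \<in> borel_measurable M" using bm_M[OF L_bm[OF W, of "Suc n"]] n by simp
  have intfg: "integrable M (\<lambda>\<omega>. exp (b' * S' \<omega>) * L (Suc n) W \<omega>)"
    using n by (intro bmI bm_mult bm_exp bm_mult[OF bm_const bmS'] L_bm[OF W]) auto
  have Intg: "(\<integral>\<omega>. L (Suc n) W \<omega> * exp (b' * S' \<omega>) \<partial>M) = (\<integral>\<omega>. exp (b' * S' \<omega>) * G \<omega> \<partial>M)"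
    unfolding G_def using SF.real_cond_exp_intg(2)[OF intfg fF LM] by (simp add: mult.commute)
  have intG: "integrable M (\<lambda>\<omega>. exp (b' * S' \<omega>) * G \<omega>)"
    unfolding G_def using SF.real_cond_exp_intg(1)[OF intfg fF LM] .
  have intu: "integrable M (\<lambda>\<omega>. u n (ch \<omega>))" using bm_u[OF chbm] bmI by blast
  have intR: "integrable M (\<lambda>\<omega>. L n W \<omega> * exp (bt n * S \<omega>))"
    using n by (intro bmI bm_mult bm_exp bm_mult[OF bm_const S(2)] L_bm[OF W]) auto
  have ptw: "AE \<omega> in M. u n (ch \<omega>) + (1 / b') * (1 - exp (b' * S' \<omega>) * G \<omega>)
      = (1 / bt n) * (1 - L n W \<omega> * exp (bt n * S \<omega>))"
    using a(2)
  proof eventually_elim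
    case (elim \<omega>)
    then have "0 < G \<omega>" using a(1) by simp
    note G0 = this
    have chv: "ch \<omega> = - (ln (G \<omega>) + b' * S \<omega>) / (\<alpha> n + b')" unfolding ch_def using an b'pos by (simp add: field_simps)
    have "(1 / \<alpha> n) * (1 - exp (- \<alpha> n * ch \<omega>)) + (1 / b') * (1 - exp (b' * (S \<omega> + ch \<omega>)) * G \<omega>)
         = (1 / bt n) * (1 - G \<omega> powr (bt n / b') * exp (bt n * S \<omega>))"
      unfolding chv by (rule key_eq[OF an b'pos rec G0])
    then show ?case unfolding exp_util_def Lq S'_def by simp
  qed
  have "(\<Sum>s\<in>{n..T}. \<integral>\<omega>. u s (c s \<omega>) \<partial>M)
      = (\<integral>\<omega>. u n (ch \<omega>) \<partial>M) + (\<Sum>s\<in>{Suc n..T}. \<integral>\<omega>. u s (c' s \<omega>) \<partial>M)"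
    unfolding split ceq3 by (simp add: c_def)
  also have "\<dots> = (\<integral>\<omega>. u n (ch \<omega>) \<partial>M) + (1 / b') * (1 - \<integral>\<omega>. exp (b' * S' \<omega>) * G \<omega> \<partial>M)"
    using c'3 Intg by simp
  also have "\<dots> = (\<integral>\<omega>. u n (ch \<omega>) + (1 / b') * (1 - exp (b' * S' \<omega>) * G \<omega>) \<partial>M)"
    by (rule int_aff[OF intu intG, symmetric])
  also have "\<dots> = (\<integral>\<omega>. (1 / bt n) * (1 - L n W \<omega> * exp (bt n * S \<omega>)) \<partial>M)"
    by (rule integral_cong_AE[OF _ _ ptw]) (use intu intG intR in auto)
  also have "\<dots> = (1 / bt n) * (1 - \<integral>\<omega>. L n W \<omega> * exp (bt n * S \<omega>) \<partial>M)"
    by (rule int_aff0[OF intR])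
  finally show "\<exists>c. (\<forall>s\<in>{n..T}. c s \<in> borel_measurable (F s) \<and> bm M (c s)) \<and>
       (AE \<omega> in M. S \<omega> + (\<Sum>s\<in>{n..T}. c s \<omega>) = W \<omega>) \<and>
       (\<Sum>s\<in>{n..T}. \<integral>\<omega>. u s (c s \<omega>) \<partial>M) = (1 / bt n) * (1 - \<integral>\<omega>. L n W \<omega> * exp (bt n * S \<omega>) \<partial>M)"
    using P1 P2 by blast
qed


lemma Uval_eq:
  assumes r_pred: "\<forall>t\<in>{1..T}. r t \<in> borel_measurable (F (t - 1))"
    and r_nonneg: "\<forall>t\<in>{1..T}. \<forall>\<omega>\<in>space M. 0 \<le> r t \<omega>"
    and r_bdd: "\<exists>C. \<forall>t\<in>{1..T}. \<forall>\<omega>\<in>space M. r t \<omega> \<le> C"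
    and W: "W \<in> borel_measurable (F T)" "AE \<omega> in M. \<bar>W \<omega>\<bar> \<le> C"
  shows "Uval M F T r u (\<lambda>\<omega>. x + W \<omega>) = (1 / bt 1) * (1 - exp (- bt 1 * x) * integral\<^sup>L M (L 1 W))"
proof -
  obtain R where R: "\<forall>t\<in>{1..T}. \<forall>\<omega>\<in>space M. r t \<omega> \<le> R" using r_bdd by blast
  have bank_meas: "bank r s \<in> borel_measurable (F s)" if s: "s \<in> {1..T}" for s
  proof -
    have "(\<lambda>\<omega>. 1 + r k \<omega>) \<in> borel_measurable (F s)" if k: "k \<in> {1..s}" for k
    proof -
      have "r k \<in> borel_measurable (F (k - 1))" using r_pred k s by auto
      then have "r k \<in> borel_measurable (F s)" by (rule meas_mono[rotated 2]) (use k s in auto)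
      then show ?thesis by simp
    qed
    then show ?thesis unfolding bank_def[abs_def] by (rule borel_measurable_prod)
  qed
  have bank_ge: "1 \<le> bank r s \<omega>" if "s \<in> {1..T}" "\<omega> \<in> space M" for s \<omega>
    unfolding bank_def using that r_nonneg by (intro prod_ge_1) auto
  have bank_le: "bank r s \<omega> \<le> (1 + R) ^ s" if "s \<in> {1..T}" "\<omega> \<in> space M" for s \<omega>
  proof -
    have "bank r s \<omega> \<le> (\<Prod>k\<in>{1..s}. 1 + R)"
      unfolding bank_def using that r_nonneg R by (intro prod_mono) auto
    then show ?thesis by simp
  qed
  define S0 where "S0 = (\<lambda>\<omega>::'a. - x)"
  have S0: "S0 \<in> borel_measurable (F (1 - 1))" "bm M S0" unfolding S0_def by auto
  define V where "V = (1 / bt 1) * (1 - \<integral>\<omega>. L 1 W \<omega> * exp (bt 1 * S0 \<omega>) \<partial>M)"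
  define A where "A = {(\<Sum>t\<in>{1..T}. integral\<^sup>L M (\<lambda>\<omega>. u t (Y t \<omega> / bank r t \<omega>))) | Y.
      Y \<in> admissible M F T r (\<lambda>\<omega>. x + W \<omega>)}"
  have upper: "a \<le> V" if "a \<in> A" for a
  proof -
    obtain Y where a: "a = (\<Sum>t\<in>{1..T}. integral\<^sup>L M (\<lambda>\<omega>. u t (Y t \<omega> / bank r t \<omega>)))"
      and Y: "Y \<in> admissible M F T r (\<lambda>\<omega>. x + W \<omega>)" using \<open>a \<in> A\<close> unfolding A_def by blast
    define c where "c = (\<lambda>t \<omega>. Y t \<omega> / bank r t \<omega>)"
    have cs: "c s \<in> borel_measurable (F s) \<and> bm M (c s)" if s: "s \<in> {1..T}" for s
    proof -
      have Ys: "Y s \<in> borel_measurable (F s)" "Linf M (F T) (Y s)"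
        using Y s unfolding admissible_def by auto
      obtain D where D: "AE \<omega> in M. \<bar>Y s \<omega>\<bar> \<le> D" using Ys(2) unfolding Linf_def by blast
      have m: "c s \<in> borel_measurable (F s)" unfolding c_def using Ys(1) bank_meas[OF s] by simp
      have "AE \<omega> in M. \<bar>c s \<omega>\<bar> \<le> D" using D AE_space
      proof eventually_elim
        case (elim \<omega>)
        have b1: "1 \<le> bank r s \<omega>" using bank_ge[OF s elim(2)] .
        have "\<bar>c s \<omega>\<bar> = \<bar>Y s \<omega>\<bar> / bank r s \<omega>" unfolding c_def using b1 by simp
        also have "\<dots> \<le> \<bar>Y s \<omega>\<bar>" using b1 by (simp add: divide_le_eq mult_le_cancel_left1)
        finally show ?case using elim(1) by simp
      qed
      then show ?thesis unfolding bm_def using m meas_M[of s "c s"] s by auto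
    qed
    have sum: "AE \<omega> in M. S0 \<omega> + (\<Sum>s\<in>{1..T}. c s \<omega>) = W \<omega>"
      using Y unfolding admissible_def c_def S0_def by (auto elim!: eventually_mono)
    have "a = (\<Sum>s\<in>{1..T}. \<integral>\<omega>. u s (c s \<omega>) \<partial>M)" unfolding a c_def ..
    also have "\<dots> \<le> V" unfolding V_def
      by (rule UB[OF W _ _ S0 cs sum]) (use T1 in auto)
    finally show ?thesis .
  qed
  have attained: "V \<in> A"
  proof -
    obtain c where c1: "\<forall>s\<in>{1..T}. c s \<in> borel_measurable (F s) \<and> bm M (c s)"
      and c2: "AE \<omega> in M. S0 \<omega> + (\<Sum>s\<in>{1..T}. c s \<omega>) = W \<omega>"
      and c3: "(\<Sum>s\<in>{1..T}. \<integral>\<omega>. u s (c s \<omega>) \<partial>M) = V"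
      using EX[OF W _ _ S0] T1 unfolding V_def by auto
    define Y where "Y = (\<lambda>t \<omega>. c t \<omega> * bank r t \<omega>)"
    have YY: "\<And>t \<omega>. t \<in> {1..T} \<Longrightarrow> \<omega> \<in> space M \<Longrightarrow> Y t \<omega> / bank r t \<omega> = c t \<omega>"
      unfolding Y_def using bank_ge by (metis nonzero_mult_div_cancel_right not_one_le_zero)
    have Yadm: "Y \<in> admissible M F T r (\<lambda>\<omega>. x + W \<omega>)"
      unfolding admissible_def
    proof (intro CollectI conjI ballI)
      fix t assume t: "t \<in> {1..T}"
      have ct: "c t \<in> borel_measurable (F t)" "bm M (c t)" using c1 t by auto
      show Ym: "Y t \<in> borel_measurable (F t)" unfolding Y_def using ct(1) bank_meas[OF t] by simp
      obtain D where D: "AE \<omega> in M. \<bar>c t \<omega>\<bar> \<le> D" using ct(2) unfolding bm_def by blast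
      have "AE \<omega> in M. \<bar>Y t \<omega>\<bar> \<le> D * (1 + R) ^ t" using D AE_space
      proof eventually_elim
        case (elim \<omega>)
        have b1: "1 \<le> bank r t \<omega>" "bank r t \<omega> \<le> (1 + R) ^ t"
          using bank_ge[OF t elim(2)] bank_le[OF t elim(2)] by auto
        have "\<bar>Y t \<omega>\<bar> = \<bar>c t \<omega>\<bar> * bank r t \<omega>" unfolding Y_def using b1 by (simp add: abs_mult)
        also have "\<dots> \<le> D * (1 + R) ^ t" using b1 elim(1) by (intro mult_mono) auto
        finally show ?case .
      qed
      moreover have "Y t \<in> borel_measurable (F T)" using meas_mono[OF _ _ Ym, of T] t by auto
      ultimately show "Linf M (F T) (Y t)" unfolding Linf_def by blast
    next
      show "AE \<omega> in M. (\<Sum>t\<in>{1..T}. Y t \<omega> / bank r t \<omega>) = x + W \<omega>"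
        using c2 AE_space
      proof eventually_elim
        case (elim \<omega>)
        have "(\<Sum>t\<in>{1..T}. Y t \<omega> / bank r t \<omega>) = (\<Sum>t\<in>{1..T}. c t \<omega>)"
          using YY elim(2) by (intro sum.cong) auto
        then show ?case using elim(1) unfolding S0_def by simp
      qed
    qed
    have "(\<Sum>t\<in>{1..T}. integral\<^sup>L M (\<lambda>\<omega>. u t (Y t \<omega> / bank r t \<omega>))) = (\<Sum>s\<in>{1..T}. \<integral>\<omega>. u s (c s \<omega>) \<partial>M)"
    proof (rule sum.cong[OF refl])
      fix t assume t: "t \<in> {1..T}"
      show "integral\<^sup>L M (\<lambda>\<omega>. u t (Y t \<omega> / bank r t \<omega>)) = integral\<^sup>L M (\<lambda>\<omega>. u t (c t \<omega>))"
        by (rule Bochner_Integration.integral_cong[OF refl]) (simp add: YY[OF t])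
    qed
    note eqs = this
    show ?thesis unfolding A_def
    proof (intro CollectI exI[of _ Y] conjI)
      show "V = (\<Sum>t\<in>{1..T}. integral\<^sup>L M (\<lambda>\<omega>. u t (Y t \<omega> / bank r t \<omega>)))"
        using eqs c3 by simp
    qed (rule Yadm)
  qed
  have "Uval M F T r u (\<lambda>\<omega>. x + W \<omega>) = Sup A" unfolding Uval_def A_def ..
  also have "\<dots> = V" using attained upper by (rule cSup_eq_maximum)
  also have "V = (1 / bt 1) * (1 - exp (- bt 1 * x) * integral\<^sup>L M (L 1 W))"
    unfolding V_def S0_def by (simp add: mult.commute)
  finally show ?thesis .
qed

lemma L_zero: assumes "t \<le> T" shows "AE \<omega> in M. L t (\<lambda>_. 0) \<omega> = 1"
  using assms
proof (induction t rule: inc_induct)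
  case base
  then show ?case unfolding L_T by simp
next
  case (step n)
  interpret SF: sigma_finite_subalgebra M "F n" using sfs step by simp
  have m: "L (Suc n) (\<lambda>_. 0) \<in> borel_measurable M"
    using bm_M[OF L_bm[of "\<lambda>_. 0" 0 "Suc n"]] step by simp
  have "AE \<omega> in M. real_cond_exp M (F n) (L (Suc n) (\<lambda>_. 0)) \<omega> = real_cond_exp M (F n) (\<lambda>_. 1) \<omega>"
    by (rule SF.real_cond_exp_cong[OF step.IH m]) (use step in auto)
  moreover have "AE \<omega> in M. real_cond_exp M (F n) (\<lambda>_. 1) \<omega> = 1"
    by (rule SF.real_cond_exp_F_meas) auto
  ultimately have "AE \<omega> in M. real_cond_exp M (F n) (L (Suc n) (\<lambda>_. 0)) \<omega> = 1"
    by eventually_elim simp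
  moreover have nT: "n < T" using step by auto
  ultimately show ?case unfolding L_step[OF nT] by (auto elim!: eventually_mono)
qed

end

lemma final_alg:
  fixes b E w h :: real
  assumes b: "0 < b" and E: "0 < E"
  shows "((1 / b) * (1 - exp (- b * (w + h)) * E) = (1 / b) * (1 - exp (- b * w) * 1)) \<longleftrightarrow> h = (1 / b) * ln E"
proof -
  have e: "exp (- b * (w + h)) * E = exp (- b * w) * (exp (- b * h) * E)"
    by (simp add: algebra_simps flip: exp_add)
  have "((1 / b) * (1 - exp (- b * (w + h)) * E) = (1 / b) * (1 - exp (- b * w) * 1))
      \<longleftrightarrow> exp (- b * w) * (exp (- b * h) * E) = exp (- b * w)" unfolding e using b by auto
  also have "(exp (- b * w) * (exp (- b * h) * E) = exp (- b * w)) \<longleftrightarrow> exp (- b * h) * E = 1"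
    by simp
  also have "\<dots> \<longleftrightarrow> E = exp (b * h)"
    by (metis exp_minus_inverse mult.commute mult.left_neutral mult_minus_left
        nonzero_mult_div_cancel_left exp_not_eq_zero mult_left_cancel)
  also have "\<dots> \<longleftrightarrow> ln E = b * h" using E by (metis exp_ln ln_exp)
  also have "\<dots> \<longleftrightarrow> h = (1 / b) * ln E" using b by (auto simp: field_simps)
  finally show ?thesis .
qed

theorem theorem3p4:
  fixes M :: "'a measure" and F :: "nat \<Rightarrow> 'a measure" and T :: nat
    and r :: "nat \<Rightarrow> 'a \<Rightarrow> real" and \<alpha> :: "nat \<Rightarrow> real"
    and Z :: "'a \<Rightarrow> real" and x w :: real
  assumes "prob_space M"
    and "T \<ge> 1"
    and filt_sub: "\<forall>t\<le>T. subalgebra M (F t)"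
    and filt_mono: "\<forall>s t. s \<le> t \<and> t \<le> T \<longrightarrow> sets (F s) \<subseteq> sets (F t)"
    and r_pred: "\<forall>t\<in>{1..T}. r t \<in> borel_measurable (F (t - 1))"
    and r_nonneg: "\<forall>t\<in>{1..T}. \<forall>\<omega>\<in>space M. 0 \<le> r t \<omega>"
    and r_bdd: "\<exists>C. \<forall>t\<in>{1..T}. \<forall>\<omega>\<in>space M. r t \<omega> \<le> C"
    and \<alpha>_pos: "\<forall>t\<in>{1..T}. 0 < \<alpha> t"
    and Z: "Linf M (F T) Z"
  shows "(Uval M F T r (exp_util \<alpha>) Z
           = (1 / beta T \<alpha> 1) * (1 - integral\<^sup>L M (Lfun M F T \<alpha> 1 Z))) \<and>
         (Uval M F T r (exp_util \<alpha>) (\<lambda>\<omega>. x - Z \<omega>)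
           = (1 / beta T \<alpha> 1) * (1 - exp (- beta T \<alpha> 1 * x)
                 * integral\<^sup>L M (Lfun M F T \<alpha> 1 (\<lambda>\<omega>. - Z \<omega>)))) \<and>
         (\<forall>h::real. Uval M F T r (exp_util \<alpha>) (\<lambda>\<omega>. w + h - Z \<omega>) = Uval M F T r (exp_util \<alpha>) (\<lambda>\<omega>. w)
           \<longleftrightarrow> h = (1 / beta T \<alpha> 1) * ln (integral\<^sup>L M (Lfun M F T \<alpha> 1 (\<lambda>\<omega>. - Z \<omega>))))"
proof -
  have "es M F T \<alpha>" unfolding es_def es_axioms_def using assms by auto
  then interpret E: es M F T \<alpha> .
  obtain CZ where Zm: "Z \<in> borel_measurable (F T)" and ZC: "AE \<omega> in M. \<bar>Z \<omega>\<bar> \<le> CZ"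
    using Z unfolding Linf_def by blast
  have mZm: "(\<lambda>\<omega>. - Z \<omega>) \<in> borel_measurable (F T)" using Zm by simp
  have mZC: "AE \<omega> in M. \<bar>- Z \<omega>\<bar> \<le> CZ" using ZC by simp
  have b1: "0 < beta T \<alpha> 1" using E.bt_pos assms(2) by simp
  have a: "Uval M F T r (exp_util \<alpha>) Z = (1 / beta T \<alpha> 1) * (1 - integral\<^sup>L M (Lfun M F T \<alpha> 1 Z))"
    using E.Uval_eq[OF r_pred r_nonneg r_bdd Zm ZC, where x = 0] by simp
  have b: "\<And>x. Uval M F T r (exp_util \<alpha>) (\<lambda>\<omega>. x - Z \<omega>)
           = (1 / beta T \<alpha> 1) * (1 - exp (- beta T \<alpha> 1 * x)
                 * integral\<^sup>L M (Lfun M F T \<alpha> 1 (\<lambda>\<omega>. - Z \<omega>)))"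
    using E.Uval_eq[OF r_pred r_nonneg r_bdd mZm mZC] by simp
  have L0: "integral\<^sup>L M (Lfun M F T \<alpha> 1 (\<lambda>_. 0)) = 1"
  proof -
    have "integral\<^sup>L M (Lfun M F T \<alpha> 1 (\<lambda>_. 0)) = integral\<^sup>L M (\<lambda>_. 1)"
      using E.L_zero[of 1] assms(2) E.bm_M[OF E.L_bm[of "\<lambda>_. 0" 0 1]]
      by (intro integral_cong_AE) auto
    also have "\<dots> = 1" by (simp add: E.prob_space)
    finally show ?thesis .
  qed
  have cw: "Uval M F T r (exp_util \<alpha>) (\<lambda>\<omega>. w) = (1 / beta T \<alpha> 1) * (1 - exp (- beta T \<alpha> 1 * w) * 1)"
    using E.Uval_eq[OF r_pred r_nonneg r_bdd, of "\<lambda>_. 0" 0 w] L0 by simp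
  have Epos: "0 < integral\<^sup>L M (Lfun M F T \<alpha> 1 (\<lambda>\<omega>. - Z \<omega>))"
  proof -
    obtain a0 b0 where ab: "0 < a0" "AE \<omega> in M. a0 \<le> Lfun M F T \<alpha> 1 (\<lambda>\<omega>. - Z \<omega>) \<omega> \<and> Lfun M F T \<alpha> 1 (\<lambda>\<omega>. - Z \<omega>) \<omega> \<le> b0"
      using E.L_props[OF mZm mZC, of 1] assms(2) by auto
    have "integral\<^sup>L M (\<lambda>_. a0) \<le> integral\<^sup>L M (Lfun M F T \<alpha> 1 (\<lambda>\<omega>. - Z \<omega>))"
      using ab(2) E.bmI[OF E.L_bm[OF mZm mZC, of 1]] assms(2)
      by (intro integral_mono_AE) (auto elim!: eventually_mono)
    moreover have "integral\<^sup>L M (\<lambda>_. a0) = a0" by (simp add: E.prob_space)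
    ultimately show ?thesis using ab(1) by simp
  qed
  have c: "\<forall>h::real. Uval M F T r (exp_util \<alpha>) (\<lambda>\<omega>. w + h - Z \<omega>) = Uval M F T r (exp_util \<alpha>) (\<lambda>\<omega>. w)
           \<longleftrightarrow> h = (1 / beta T \<alpha> 1) * ln (integral\<^sup>L M (Lfun M F T \<alpha> 1 (\<lambda>\<omega>. - Z \<omega>)))"
  proof
    fix h :: real
    have "(\<lambda>\<omega>. w + h - Z \<omega>) = (\<lambda>\<omega>. (w + h) - Z \<omega>)" by simp
    then show "Uval M F T r (exp_util \<alpha>) (\<lambda>\<omega>. w + h - Z \<omega>) = Uval M F T r (exp_util \<alpha>) (\<lambda>\<omega>. w)
           \<longleftrightarrow> h = (1 / beta T \<alpha> 1) * ln (integral\<^sup>L M (Lfun M F T \<alpha> 1 (\<lambda>\<omega>. - Z \<omega>)))"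
      unfolding b[of "w + h"] cw using final_alg[OF b1 Epos, of w h] by simp
  qed
  show ?thesis using a b c by blast
qed

end
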